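(* Let $X$ be a $T_1$ space in which every open subspace is $C$-embedded (every real-valued continuous function on an open subspace extends to a continuous function on $X$). Then for any two ideals $\mathcal{P},\mathcal{Q}$ of closed subsets of $X$, $C(X)_{\mathcal{P}\vee\mathcal{Q}}=C(X)_\mathcal{P}\vee C(X)_\mathcal{Q}$, where $\mathcal{P}\vee\mathcal{Q}=\{A\cup B\colon A\in\mathcal{P},B\in\mathcal{Q}\}$ and $C(X)_\mathcal{P}\vee C(X)_\mathcal{Q}=\{\sum_{i=1}^m f_ig_i\colon m\in\mathbb{N}, f_i\in C(X)_\mathcal{P}, g_i\in C(X)_\mathcal{Q}\}$.
   Context: An ideal of closed subsets of $X$ is a family $\mathcal{P}$ of closed subsets closed under finite unions and under passing to closed subsets. $D_f$ is the set of discontinuity points of $f\in\mathbb{R}^X$; $C(X)_\mathcal{P}=\{f\in\mathbb{R}^X\colon\overline{D_f}\in\mathcal{P}\}$ with pointwise operations. *)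

theory Defs
  imports "HOL-Analysis.Analysis"
begin

text \<open>Real-valued functions on X are modelled as functions 'a \<Rightarrow> real that vanish
  outside topspace X (so each element of R^X has a unique representative).\<close>

definition real_funs :: "'a topology \<Rightarrow> ('a \<Rightarrow> real) set" where
  "real_funs X = {f. \<forall>x. x \<notin> topspace X \<longrightarrow> f x = 0}"

definition continuous_at_pt :: "'a topology \<Rightarrow> ('a \<Rightarrow> real) \<Rightarrow> 'a \<Rightarrow> bool" where
  "continuous_at_pt X f x \<longleftrightarrow>
     (\<forall>V. open V \<and> f x \<in> V \<longrightarrow> (\<exists>U. openin X U \<and> x \<in> U \<and> (\<forall>y\<in>U. f y \<in> V)))"

definition discont_pts :: "'a topology \<Rightarrow> ('a \<Rightarrow> real) \<Rightarrow> 'a set" where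
  "discont_pts X f = {x \<in> topspace X. \<not> continuous_at_pt X f x}"

definition closed_ideal :: "'a topology \<Rightarrow> 'a set set \<Rightarrow> bool" where
  "closed_ideal X P \<longleftrightarrow>
     (\<forall>A\<in>P. closedin X A) \<and> {} \<in> P \<and>
     (\<forall>A\<in>P. \<forall>B\<in>P. A \<union> B \<in> P) \<and>
     (\<forall>A\<in>P. \<forall>B. closedin X B \<and> B \<subseteq> A \<longrightarrow> B \<in> P)"

definition CP :: "'a topology \<Rightarrow> 'a set set \<Rightarrow> ('a \<Rightarrow> real) set" where
  "CP X P = {f \<in> real_funs X. X closure_of (discont_pts X f) \<in> P}"

definition ideal_join :: "'a set set \<Rightarrow> 'a set set \<Rightarrow> 'a set set" where
  "ideal_join P Q = {A \<union> B | A B. A \<in> P \<and> B \<in> Q}"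

definition prod_sums :: "('a \<Rightarrow> real) set \<Rightarrow> ('a \<Rightarrow> real) set \<Rightarrow> ('a \<Rightarrow> real) set" where
  "prod_sums F G = {h. \<exists>(m::nat) f g. (\<forall>i\<in>{1..m}. f i \<in> F \<and> g i \<in> G) \<and>
                         h = (\<lambda>x. \<Sum>i=1..m. f i x * g i x)}"

definition open_C_embedded :: "'a topology \<Rightarrow> bool" where
  "open_C_embedded X \<longleftrightarrow>
     (\<forall>U f. openin X U \<and> continuous_map (subtopology X U) euclideanreal f \<longrightarrow>
        (\<exists>g. continuous_map X euclideanreal g \<and> (\<forall>x\<in>U. g x = f x)))"

end

theory Submission
  imports Defs
begin

lemma cap_iff:
  assumes "x \<in> topspace X"
  shows "continuous_at_pt X f x \<longleftrightarrow> (f \<longlongrightarrow> f x) (atin X x)"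
proof
  assume c: "continuous_at_pt X f x"
  show "(f \<longlongrightarrow> f x) (atin X x)"
  proof (rule topological_tendstoI)
    fix S :: "real set" assume "open S" "f x \<in> S"
    then obtain U where "openin X U" "x \<in> U" "\<forall>y\<in>U. f y \<in> S"
      using c unfolding continuous_at_pt_def by blast
    then show "\<forall>\<^sub>F y in atin X x. f y \<in> S"
      unfolding eventually_atin by blast
  qed
next
  assume t: "(f \<longlongrightarrow> f x) (atin X x)"
  show "continuous_at_pt X f x" unfolding continuous_at_pt_def
  proof (intro allI impI)
    fix V :: "real set" assume V: "open V \<and> f x \<in> V"
    then have "\<forall>\<^sub>F y in atin X x. f y \<in> V" using t topological_tendstoD by blast
    then obtain U where "openin X U" "x \<in> U" "\<forall>y\<in>U - {x}. f y \<in> V"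
      using assms unfolding eventually_atin by blast
    then show "\<exists>U. openin X U \<and> x \<in> U \<and> (\<forall>y\<in>U. f y \<in> V)"
      using V by (intro exI[of _ U]) auto
  qed
qed

lemma cap_map:
  assumes "continuous_map X euclideanreal k" "x \<in> topspace X"
  shows "continuous_at_pt X k x"
  unfolding continuous_at_pt_def
proof (intro allI impI)
  fix V :: "real set" assume V: "open V \<and> k x \<in> V"
  have "openin X {y \<in> topspace X. k y \<in> V}"
    using assms(1) V by (simp add: continuous_map_def)
  then show "\<exists>U. openin X U \<and> x \<in> U \<and> (\<forall>y\<in>U. k y \<in> V)"
    using assms(2) V by (intro exI[of _ "{y \<in> topspace X. k y \<in> V}"]) auto
qed

lemma cap_local:
  assumes "openin X U" "x \<in> U" "\<forall>y\<in>U. f y = g y" "continuous_at_pt X f x"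
  shows "continuous_at_pt X g x"
  unfolding continuous_at_pt_def
proof (intro allI impI)
  fix V :: "real set" assume V: "open V \<and> g x \<in> V"
  then have "open V \<and> f x \<in> V" using assms by auto
  then obtain U' where U': "openin X U'" "x \<in> U'" "\<forall>y\<in>U'. f y \<in> V"
    using assms(4) unfolding continuous_at_pt_def by blast
  show "\<exists>U. openin X U \<and> x \<in> U \<and> (\<forall>y\<in>U. g y \<in> V)"
    using U' assms by (intro exI[of _ "U \<inter> U'"]) auto
qed

lemma cap_on_open:
  assumes "openin X W" "\<forall>y\<in>W. continuous_at_pt X h y"
  shows "continuous_map (subtopology X W) euclideanreal h"
  unfolding continuous_map_def
proof (intro conjI allI impI)
  show "h \<in> topspace (subtopology X W) \<rightarrow> topspace euclideanreal" by simp
  fix V :: "real set" assume "openin euclideanreal V"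
  then have oV: "open V" by simp
  let ?S = "{x \<in> topspace (subtopology X W). h x \<in> V}"
  have OX: "W \<subseteq> topspace X" using assms(1) openin_subset by blast
  have "openin X ?S"
  proof (subst openin_subopen, intro ballI)
    fix y assume y: "y \<in> ?S"
    have "continuous_at_pt X h y" "h y \<in> V" using y assms(2) by auto
    then obtain U' where U': "openin X U'" "y \<in> U'" "\<forall>z\<in>U'. h z \<in> V"
      using oV unfolding continuous_at_pt_def by blast
    show "\<exists>T. openin X T \<and> y \<in> T \<and> T \<subseteq> ?S"
      using U' y assms(1) OX openin_subset[OF U'(1)]
      by (intro exI[of _ "U' \<inter> W"]) auto
  qed
  moreover have "?S \<subseteq> W" by auto
  ultimately show "openin (subtopology X W) ?S"
    using assms(1) openin_open_subtopology by blast
qed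

lemma ideal_UN:
  assumes "closed_ideal X P" "finite I" "\<forall>i\<in>I. S i \<in> P"
  shows "(\<Union>i\<in>I. S i) \<in> P"
  using assms(2,3)
proof (induction I rule: finite_induct)
  case empty then show ?case using assms(1) unfolding closed_ideal_def by simp
next
  case (insert a F)
  then have "S a \<in> P" "(\<Union>i\<in>F. S i) \<in> P" by auto
  then show ?case using assms(1) unfolding closed_ideal_def by (metis UN_insert)
qed

lemma ideal_closure:
  assumes "closed_ideal X P" "A \<in> P" "D \<subseteq> A"
  shows "X closure_of D \<in> P"
proof -
  have "closedin X A" using assms by (simp add: closed_ideal_def)
  then have "X closure_of D \<subseteq> A" using assms(3) closure_of_minimal by blast
  moreover have "closedin X (X closure_of D)" by simp
  ultimately show ?thesis using assms(1,2) unfolding closed_ideal_def by blast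
qed

lemma discont_sub: "discont_pts X f \<subseteq> topspace X"
  unfolding discont_pts_def by auto

lemma dir1:
  fixes X :: "'a topology" and P Q :: "'a set set"
  assumes "t1_space X" and "open_C_embedded X"
    and "closed_ideal X P" and "closed_ideal X Q"
  shows "CP X (ideal_join P Q) \<subseteq> prod_sums (CP X P) (CP X Q)"
proof
  fix h assume h: "h \<in> CP X (ideal_join P Q)"
  then have hr: "h \<in> real_funs X" and hj: "X closure_of discont_pts X h \<in> ideal_join P Q"
    unfolding CP_def by auto
  from hj obtain A B where AB: "A \<in> P" "B \<in> Q" "X closure_of discont_pts X h = A \<union> B"
    unfolding ideal_join_def by blast
  have cA: "closedin X A" using AB(1) assms(3) unfolding closed_ideal_def by blast
  have cB: "closedin X B" using AB(2) assms(4) unfolding closed_ideal_def by blast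
  define W where "W = topspace X - (A \<union> B)"
  have oW: "openin X W" unfolding W_def using openin_diff[OF openin_topspace closedin_Un[OF cA cB]] .
  have Dsub: "discont_pts X h \<subseteq> A \<union> B"
    using closure_of_subset[OF discont_sub, of X h] AB(3) by simp
  have "\<forall>y\<in>W. continuous_at_pt X h y"
  proof
    fix y assume y: "y \<in> W"
    then have "y \<notin> discont_pts X h" "y \<in> topspace X"
      using Dsub unfolding W_def by blast+
    then show "continuous_at_pt X h y"
      unfolding discont_pts_def by simp
  qed
  then have "continuous_map (subtopology X W) euclideanreal h"
    by (rule cap_on_open[OF oW])
  then obtain k where k: "continuous_map X euclideanreal k" "\<forall>x\<in>W. k x = h x"
    using assms(2) oW unfolding open_C_embedded_def by blast
  define f where "f = (\<lambda>x. if x \<in> A then h x - k x else 0)"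
  define g where "g = (\<lambda>x. h x - f x)"
  define e where "e = (\<lambda>x. if x \<in> topspace X then 1 else (0::real))"
  have Atop: "A \<subseteq> topspace X" using cA closedin_subset by blast
  have fr: "f \<in> real_funs X"
    unfolding real_funs_def f_def using Atop by auto
  have gr: "g \<in> real_funs X"
    using fr hr unfolding real_funs_def g_def by simp
  have er: "e \<in> real_funs X" unfolding real_funs_def e_def by simp
  have De: "discont_pts X e = {}"
  proof -
    have "continuous_at_pt X e x" if x: "x \<in> topspace X" for x
    proof -
      have c1: "continuous_at_pt X (\<lambda>_. 1) x" by (rule cap_map[OF _ x]) simp
      have "\<forall>y\<in>topspace X. (\<lambda>_. 1::real) y = e y" unfolding e_def by simp
      then show ?thesis using cap_local[OF openin_topspace x _ c1] by blast
    qed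
    then show ?thesis unfolding discont_pts_def by blast
  qed
  have cl0: "\<And>R. closed_ideal X R \<Longrightarrow> {} \<in> R" unfolding closed_ideal_def by blast
  have eP: "e \<in> CP X P" using er cl0[OF assms(3)] by (simp add: CP_def De)
  have eQ: "e \<in> CP X Q" using er cl0[OF assms(4)] by (simp add: CP_def De)
  have Df: "discont_pts X f \<subseteq> A"
  proof
    fix x assume x: "x \<in> discont_pts X f"
    then have xt: "x \<in> topspace X" unfolding discont_pts_def by blast
    show "x \<in> A"
    proof (rule ccontr)
      assume nA: "x \<notin> A"
      have c0: "continuous_at_pt X (\<lambda>_. 0) x" by (rule cap_map[OF _ xt]) simp
      have o: "openin X (topspace X - A)" using cA by blast
      have "\<forall>y\<in>topspace X - A. (\<lambda>_. 0::real) y = f y" unfolding f_def by simp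
      then have "continuous_at_pt X f x"
        using cap_local[OF o _ _ c0] xt nA by blast
      then show False using x by (simp add: discont_pts_def)
    qed
  qed
  have Dg: "discont_pts X g \<subseteq> B"
  proof
    fix x assume x: "x \<in> discont_pts X g"
    then have xt: "x \<in> topspace X" unfolding discont_pts_def by blast
    show "x \<in> B"
    proof (rule ccontr)
      assume nB: "x \<notin> B"
      have ck: "continuous_at_pt X k x" by (rule cap_map[OF k(1) xt])
      have o: "openin X (topspace X - B)" using cB by blast
      have "\<forall>y\<in>topspace X - B. k y = g y"
      proof
        fix y assume y: "y \<in> topspace X - B"
        show "k y = g y"
        proof (cases "y \<in> A")
          case True then show ?thesis unfolding g_def f_def by simp
        next
          case False
          then have "y \<in> W" using y unfolding W_def by blast
          then show ?thesis using k(2) False unfolding g_def f_def by simp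
        qed
      qed
      then have "continuous_at_pt X g x"
        using cap_local[OF o _ _ ck] xt nB by blast
      then show False using x by (simp add: discont_pts_def)
    qed
  qed
  have fP: "f \<in> CP X P" using fr ideal_closure[OF assms(3) AB(1) Df] by (simp add: CP_def)
  have gQ: "g \<in> CP X Q" using gr ideal_closure[OF assms(4) AB(2) Dg] by (simp add: CP_def)
  define F where "F = (\<lambda>i::nat. if i = 1 then f else e)"
  define G where "G = (\<lambda>i::nat. if i = 1 then e else g)"
  have hsum: "h = (\<lambda>x. \<Sum>i=1..2. F i x * G i x)"
  proof
    fix x
    have s: "(\<Sum>i=1..(2::nat). F i x * G i x) = f x * e x + e x * g x"
      by (simp add: numeral_2_eq_2 F_def G_def)
    show "h x = (\<Sum>i=1..2. F i x * G i x)"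
    proof (cases "x \<in> topspace X")
      case True then show ?thesis unfolding s e_def g_def by simp
    next
      case False
      then have "h x = 0" using hr unfolding real_funs_def by blast
      then show ?thesis unfolding s e_def using False by simp
    qed
  qed
  have FG: "\<forall>i\<in>{1..2}. F i \<in> CP X P \<and> G i \<in> CP X Q"
    using fP gQ eP eQ unfolding F_def G_def by simp
  show "h \<in> prod_sums (CP X P) (CP X Q)"
    unfolding prod_sums_def
    by (rule CollectI, rule exI[of _ 2], rule exI[of _ F], rule exI[of _ G]) (use FG hsum in simp)
qed

lemma dir2:
  fixes X :: "'a topology" and P Q :: "'a set set"
  assumes "t1_space X" and "open_C_embedded X"
    and "closed_ideal X P" and "closed_ideal X Q"
  shows "prod_sums (CP X P) (CP X Q) \<subseteq> CP X (ideal_join P Q)"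
proof -
  show "prod_sums (CP X P) (CP X Q) \<subseteq> CP X (ideal_join P Q)"
  proof
    fix h assume "h \<in> prod_sums (CP X P) (CP X Q)"
    then obtain m F G where FG: "\<forall>i\<in>{1..m::nat}. F i \<in> CP X P \<and> G i \<in> CP X Q"
      and hdef: "h = (\<lambda>x. \<Sum>i=1..m. F i x * G i x)"
      unfolding prod_sums_def by blast
    have hr: "h \<in> real_funs X"
      unfolding real_funs_def
    proof (intro CollectI allI impI)
      fix x assume "x \<notin> topspace X"
      then have "\<forall>i\<in>{1..m}. F i x = 0" using FG by (auto simp: CP_def real_funs_def)
      then show "h x = 0" unfolding hdef by simp
    qed
    define A where "A = (\<Union>i\<in>{1..m}. X closure_of discont_pts X (F i))"
    define B where "B = (\<Union>i\<in>{1..m}. X closure_of discont_pts X (G i))"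
    have AP: "A \<in> P" unfolding A_def
      by (rule ideal_UN[OF assms(3)]) (use FG in \<open>auto simp: CP_def\<close>)
    have BQ: "B \<in> Q" unfolding B_def
      by (rule ideal_UN[OF assms(4)]) (use FG in \<open>auto simp: CP_def\<close>)
    have cA: "closedin X A" using AP assms(3) unfolding closed_ideal_def by blast
    have cB: "closedin X B" using BQ assms(4) unfolding closed_ideal_def by blast
    have Dh: "discont_pts X h \<subseteq> A \<union> B"
    proof
      fix x assume x: "x \<in> discont_pts X h"
      show "x \<in> A \<union> B"
      proof (rule ccontr)
        assume nx: "x \<notin> A \<union> B"
        have xt: "x \<in> topspace X" using x unfolding discont_pts_def by blast
        have "\<forall>i\<in>{1..m}. continuous_at_pt X (F i) x \<and> continuous_at_pt X (G i) x"
        proof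
          fix i assume i: "i \<in> {1..m}"
          have "x \<notin> X closure_of discont_pts X (F i)" "x \<notin> X closure_of discont_pts X (G i)"
            using nx i unfolding A_def B_def by auto
          moreover have "discont_pts X (F i) \<subseteq> X closure_of discont_pts X (F i)"
            "discont_pts X (G i) \<subseteq> X closure_of discont_pts X (G i)"
            by (rule closure_of_subset[OF discont_sub])+
          ultimately have "x \<notin> discont_pts X (F i)" "x \<notin> discont_pts X (G i)" by blast+
          then show "continuous_at_pt X (F i) x \<and> continuous_at_pt X (G i) x"
            using xt unfolding discont_pts_def by simp
        qed
        then have "\<And>i. i \<in> {1..m} \<Longrightarrow> ((\<lambda>y. F i y * G i y) \<longlongrightarrow> F i x * G i x) (atin X x)"
          using cap_iff[OF xt] by (metis tendsto_mult)
        then have "((\<lambda>y. \<Sum>i=1..m. F i y * G i y) \<longlongrightarrow> (\<Sum>i=1..m. F i x * G i x)) (atin X x)"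
          by (rule tendsto_sum)
        then have "(h \<longlongrightarrow> h x) (atin X x)"
          unfolding hdef by simp
        then have "continuous_at_pt X h x" using cap_iff[OF xt] by blast
        then show False using x by (simp add: discont_pts_def)
      qed
    qed
    let ?C = "X closure_of discont_pts X h"
    have "?C \<subseteq> A \<union> B" using closure_of_minimal[OF Dh closedin_Un[OF cA cB]] .
    then have "?C = (?C \<inter> A) \<union> (?C \<inter> B)" by blast
    moreover have "?C \<inter> A \<in> P"
    proof -
      have "closedin X (?C \<inter> A)" using cA by (simp add: closedin_Int)
      then show ?thesis using AP assms(3) unfolding closed_ideal_def by blast
    qed
    moreover have "?C \<inter> B \<in> Q"
    proof -
      have "closedin X (?C \<inter> B)" using cB by (simp add: closedin_Int)
      then show ?thesis using BQ assms(4) unfolding closed_ideal_def by blast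
    qed
    ultimately have "?C \<in> ideal_join P Q" unfolding ideal_join_def
      by (intro CollectI exI[of _ "?C \<inter> A"] exI[of _ "?C \<inter> B"]) simp
    then show "h \<in> CP X (ideal_join P Q)" using hr by (simp add: CP_def)
  qed
qed

theorem theorem2p3:
  fixes X :: "'a topology" and P Q :: "'a set set"
  assumes "t1_space X" and "open_C_embedded X"
    and "closed_ideal X P" and "closed_ideal X Q"
  shows "CP X (ideal_join P Q) = prod_sums (CP X P) (CP X Q)"
  using dir1[OF assms] dir2[OF assms] by (rule antisym)

end
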